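(* Given $0<\alpha\le\beta<\infty$ there are positive numbers $c_0=c_0(\alpha,\beta)$, $c_1=c_1(\alpha,\beta)$ such that for every special Bernstein function $g$ with rate function $r=r[g]$, \[c_0\,r(t)\le|g(z)|\le c_1\,r(t)\] whenever $t>0$ and $\operatorname{Re}z\ge0$ satisfy $t|z|\in[\alpha,\beta]$. In particular one can take $c_0=1/(3e^2)$ when $\alpha=\beta=1$.
   Context: A Bernstein function $g\sim(a,b,\mu)$ is $g(z)=a+bz+\int_{(0,\infty)}(1-e^{-sz})\mu(\mathrm ds)$ with $a,b\ge0$, $\mu$ positive Radon on $(0,\infty)$, $\int\frac{s}{1+s}\mu(\mathrm ds)<\infty$, identified with its holomorphic extension to $\{\operatorname{Re}z>0\}$, continuous on $\{\operatorname{Re}z\ge0\}$. It is special if $g\ne0$ and $z/g(z)$ is again a Bernstein function. Rate function $r[g](t):=\frac a2+\frac bt+\int_{(0,\infty)}\min(s/t,1)\mu(\mathrm ds)$. *)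

theory Defs
  imports "HOL-Analysis.Analysis"
begin

definition bernstein_triple :: "real \<Rightarrow> real \<Rightarrow> real measure \<Rightarrow> bool" where
  "bernstein_triple a b \<mu> \<longleftrightarrow>
     a \<ge> 0 \<and> b \<ge> 0 \<and> sets \<mu> = sets borel \<and> emeasure \<mu> {..0} = 0 \<and>
     integrable \<mu> (\<lambda>s. s / (1 + s))"

text \<open>The Bernstein function g ~ (a,b,mu), evaluated at complex z (meaningful for Re z >= 0).\<close>
definition bernstein_fun :: "real \<Rightarrow> real \<Rightarrow> real measure \<Rightarrow> complex \<Rightarrow> complex" where
  "bernstein_fun a b \<mu> z =
     of_real a + of_real b * z + (\<integral>s. (1 - exp (- (of_real s * z))) \<partial>\<mu>)"

definition is_bernstein :: "(complex \<Rightarrow> complex) \<Rightarrow> bool" where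
  "is_bernstein f \<longleftrightarrow>
     (\<exists>a b \<mu>. bernstein_triple a b \<mu> \<and> (\<forall>z. Re z > 0 \<longrightarrow> f z = bernstein_fun a b \<mu> z))"

definition special_bernstein :: "real \<Rightarrow> real \<Rightarrow> real measure \<Rightarrow> bool" where
  "special_bernstein a b \<mu> \<longleftrightarrow>
     bernstein_triple a b \<mu> \<and>
     (\<exists>z. Re z > 0 \<and> bernstein_fun a b \<mu> z \<noteq> 0) \<and>
     is_bernstein (\<lambda>z. z / bernstein_fun a b \<mu> z)"

definition rate_fun :: "real \<Rightarrow> real \<Rightarrow> real measure \<Rightarrow> real \<Rightarrow> real" where
  "rate_fun a b \<mu> t = a / 2 + b / t + (\<integral>s. min (s / t) 1 \<partial>\<mu>)"

end

theory Submission
  imports Defs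
begin

lemma exp_lip: fixes u :: complex assumes "Re u \<ge> 0"
  shows "cmod (1 - exp (- u)) \<le> cmod u"
proof -
  have "norm ((\<lambda>w. exp (- w)) 0 - (\<lambda>w. exp (- w)) u) \<le> 1 * norm (0 - u)"
  proof (rule field_differentiable_bound[OF convex_halfspace_Re_ge[of 0]])
    fix z :: complex assume "z \<in> {x. 0 \<le> Re x}"
    then show "((\<lambda>w. exp (- w)) has_field_derivative (- exp (- z))) (at z within {x. 0 \<le> Re x})"
      by (auto intro!: derivative_eq_intros)
    show "norm (- exp (- z)) \<le> 1" using \<open>z \<in> _\<close> by (simp add: norm_exp_eq_Re)
  qed (use assms in auto)
  then show ?thesis by simp
qed

lemma exp_two: fixes u :: complex assumes "Re u \<ge> 0"
  shows "cmod (1 - exp (- u)) \<le> 2"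
proof -
  have "cmod (1 - exp (- u)) \<le> 1 + cmod (exp (-u))" using norm_triangle_ineq4[of 1 "exp(-u)"] by simp
  also have "cmod (exp (-u)) \<le> 1" using assms by (simp add: norm_exp_eq_Re)
  finally show ?thesis by simp
qed

lemma pw_bound: assumes "s \<ge> 0" "Re w \<ge> 0"
  shows "cmod (1 - exp (- (of_real s * w))) \<le> min (s * cmod w) 2"
  using exp_lip[of "of_real s * w"] exp_two[of "of_real s * w"] assms
  by (simp add: norm_mult)

lemma one_minus_exp_lower: fixes u :: real assumes "u \<ge> 0"
  shows "(1 - exp (-1)) * min u 1 \<le> 1 - exp (- u)"
proof (cases "u \<le> 1")
  case True
  have "exp ((1 - u) *\<^sub>R 0 + u *\<^sub>R (-1)) \<le> (1 - u) * exp 0 + u * exp (-1)"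
    using convex_onD[OF exp_convex, of u 0 "-1"] True assms by simp
  then show ?thesis using True by (simp add: algebra_simps)
next
  case False
  then show ?thesis by simp
qed

lemma min_frac_bound: fixes s c K :: real assumes "s > 0" "c \<ge> 0" "K \<ge> 0"
  shows "min (c * s) K \<le> max (2 * c) (2 * K) * (s / (1 + s))"
proof (cases "s \<le> 1")
  case True
  have "c * s \<le> 2 * c * (s / (1 + s))"
    using assms True by (simp add: field_simps mult_left_mono)
  also have "\<dots> \<le> max (2 * c) (2 * K) * (s / (1 + s))"
    using assms by (intro mult_right_mono) auto
  finally show ?thesis by simp
next
  case False
  have "K \<le> 2 * K * (s / (1 + s))"
    using assms False mult_left_mono[of 1 s K] by (simp add: field_simps)
  also have "\<dots> \<le> max (2 * c) (2 * K) * (s / (1 + s))"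
    using assms by (intro mult_right_mono) auto
  finally show ?thesis by simp
qed

lemma bt_AE: assumes "bernstein_triple a b \<mu>" shows "AE s in \<mu>. s > 0"
proof (rule AE_I')
  show "{..0::real} \<in> null_sets \<mu>" using assms by (auto simp: bernstein_triple_def null_sets_def)
qed auto

lemma bt_meas: assumes "bernstein_triple a b \<mu>" "f \<in> borel_measurable borel"
  shows "f \<in> borel_measurable \<mu>"
  using assms measurable_cong_sets[of \<mu> borel borel borel] by (auto simp: bernstein_triple_def)

lemma bt_int_frac: assumes "bernstein_triple a b \<mu>" shows "integrable \<mu> (\<lambda>s. s / (1 + s))"
  using assms by (simp add: bernstein_triple_def)

lemma int_min: assumes "bernstein_triple a b \<mu>" "t > 0"
  shows "integrable \<mu> (\<lambda>s. min (s / t) 1)"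
proof (rule Bochner_Integration.integrable_bound[where f="\<lambda>s. max (2 * (1/t)) (2 * 1) * (s / (1 + s))"])
  show "integrable \<mu> (\<lambda>s. max (2 * (1/t)) (2 * 1) * (s / (1 + s)))"
    by (rule integrable_mult_right) (rule bt_int_frac[OF assms(1)])
  show "(\<lambda>s. min (s / t) 1) \<in> borel_measurable \<mu>" by (rule bt_meas[OF assms(1)]) measurable
  show "AE s in \<mu>. norm (min (s / t) 1) \<le> norm (max (2 * (1/t)) (2 * 1) * (s / (1 + s)))"
    using bt_AE[OF assms(1)]
  proof (rule AE_mp, intro AE_I2 impI)
    fix s :: real assume "s > 0"
    then have "min ((1/t) * s) 1 \<le> max (2 * (1/t)) (2 * 1) * (s / (1 + s))"
      using assms by (intro min_frac_bound) auto
    then show "norm (min (s / t) 1) \<le> norm (max (2 * (1/t)) (2 * 1) * (s / (1 + s)))"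
      using \<open>s > 0\<close> assms by simp
  qed
qed

lemma int_exp: assumes "bernstein_triple a b \<mu>" "Re z \<ge> 0"
  shows "integrable \<mu> (\<lambda>s. 1 - exp (- (of_real s * z)))"
proof (rule Bochner_Integration.integrable_bound[where f="\<lambda>s. max (2 * cmod z) (2 * 2) * (s / (1 + s))"])
  show "integrable \<mu> (\<lambda>s. max (2 * cmod z) (2 * 2) * (s / (1 + s)))"
    by (rule integrable_mult_right) (rule bt_int_frac[OF assms(1)])
  show "(\<lambda>s. 1 - exp (- (of_real s * z))) \<in> borel_measurable \<mu>" by (rule bt_meas[OF assms(1)]) measurable
  show "AE s in \<mu>. norm (1 - exp (- (of_real s * z))) \<le> norm (max (2 * cmod z) (2 * 2) * (s / (1 + s)))"
    using bt_AE[OF assms(1)]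
  proof (rule AE_mp, intro AE_I2 impI)
    fix s :: real assume "s > 0"
    have "norm (1 - exp (- (of_real s * z))) \<le> min (cmod z * s) 2"
      using pw_bound[of s z] \<open>s > 0\<close> assms by (simp add: mult.commute)
    also have "\<dots> \<le> max (2 * cmod z) (2 * 2) * (s / (1 + s))"
      using \<open>s > 0\<close> by (intro min_frac_bound) auto
    finally show "norm (1 - exp (- (of_real s * z))) \<le> norm (max (2 * cmod z) (2 * 2) * (s / (1 + s)))"
      using \<open>s > 0\<close> by simp
  qed
qed

lemma pw_upper: assumes "s > 0" "t > 0" "Re z \<ge> 0" "t * cmod z \<le> \<beta>"
  shows "cmod (1 - exp (- (of_real s * z))) \<le> max 2 \<beta> * min (s / t) 1"
proof -
  have cz: "cmod z \<le> \<beta> / t" using assms by (simp add: field_simps mult.commute)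
  have 1: "cmod (1 - exp (- (of_real s * z))) \<le> min (s * cmod z) 2"
    using pw_bound[of s z] assms by simp
  show ?thesis
  proof (cases "s / t \<le> 1")
    case True
    have "s * cmod z \<le> s * (\<beta> / t)" using cz assms by (intro mult_left_mono) auto
    also have "\<dots> = \<beta> * (s / t)" by simp
    also have "\<dots> \<le> max 2 \<beta> * (s / t)" using assms by (intro mult_right_mono) auto
    finally show ?thesis using 1 True by simp
  next
    case False
    then show ?thesis using 1 by (simp add: le_max_iff_disj)
  qed
qed

lemma bt_nonneg: assumes "bernstein_triple a b \<mu>" shows "a \<ge> 0" "b \<ge> 0"
  using assms by (auto simp: bernstein_triple_def)

lemma upper: assumes bt: "bernstein_triple a b \<mu>" and t: "t > 0" and z: "Re z \<ge> 0"
  and tz: "t * cmod z \<le> \<beta>"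
  shows "cmod (bernstein_fun a b \<mu> z) \<le> max 2 \<beta> * rate_fun a b \<mu> t"
proof -
  let ?M = "max 2 \<beta>"
  let ?f = "\<lambda>s. 1 - exp (- (of_real s * z))"
  have ab: "a \<ge> 0" "b \<ge> 0" using bt_nonneg[OF bt] by auto
  have "cmod (bernstein_fun a b \<mu> z) \<le> cmod (of_real a + of_real b * z) + cmod (integral\<^sup>L \<mu> ?f)"
    unfolding bernstein_fun_def by (rule norm_triangle_ineq)
  also have "cmod (of_real a + of_real b * z) \<le> a + b * cmod z"
    using ab norm_triangle_ineq[of "of_real a" "of_real b * z"] by (simp add: norm_mult)
  also have "cmod (integral\<^sup>L \<mu> ?f) \<le> (\<integral>s. cmod (?f s) \<partial>\<mu>)"
    by (rule integral_norm_bound)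
  also have "(\<integral>s. cmod (?f s) \<partial>\<mu>) \<le> (\<integral>s. ?M * min (s / t) 1 \<partial>\<mu>)"
  proof (rule integral_mono_AE)
    show "integrable \<mu> (\<lambda>s. cmod (?f s))" using int_exp[OF bt z] by (rule integrable_norm)
    show "integrable \<mu> (\<lambda>s. ?M * min (s / t) 1)"
      by (rule integrable_mult_right) (rule int_min[OF bt t])
    show "AE s in \<mu>. cmod (?f s) \<le> ?M * min (s / t) 1"
      using bt_AE[OF bt] by eventually_elim (use pw_upper t z tz in blast)
  qed
  also have "(\<integral>s. ?M * min (s / t) 1 \<partial>\<mu>) = ?M * (\<integral>s. min (s / t) 1 \<partial>\<mu>)"
    by simp
  also have "b * cmod z \<le> ?M * (b / t)"
  proof -
    have "cmod z \<le> \<beta> / t" using tz t by (simp add: field_simps mult.commute)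
    then have "b * cmod z \<le> b * (\<beta> / t)" using ab by (intro mult_left_mono) auto
    also have "\<dots> = \<beta> * (b / t)" by simp
    also have "\<dots> \<le> ?M * (b / t)" using ab t by (intro mult_right_mono) auto
    finally show ?thesis .
  qed
  also have "a \<le> ?M * (a / 2)"
  proof -
    have "2 * (a/2) \<le> ?M * (a / 2)" using ab by (intro mult_right_mono) auto
    then show ?thesis by simp
  qed
  finally show ?thesis unfolding rate_fun_def by (simp add: algebra_simps)
qed

lemma K_bounds: "0 < 1 - exp (-1::real)" "1 - exp (-1::real) \<le> 1"
  by auto

lemma lower_re: assumes bt: "bernstein_triple a b \<mu>" and w: "Re w > 0"
  shows "(1 - exp (-1)) * rate_fun a b \<mu> (1 / Re w) \<le> Re (bernstein_fun a b \<mu> w)"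
proof -
  let ?K = "1 - exp (-1::real)"
  let ?f = "\<lambda>s. 1 - exp (- (of_real s * w))"
  have ab: "a \<ge> 0" "b \<ge> 0" using bt_nonneg[OF bt] by auto
  have tpos: "1 / Re w > 0" using w by simp
  have "Re (bernstein_fun a b \<mu> w) = a + b * Re w + (\<integral>s. Re (?f s) \<partial>\<mu>)"
    unfolding bernstein_fun_def using integral_Re[OF int_exp[OF bt less_imp_le[OF w]]] by simp
  moreover have "(\<integral>s. ?K * min (s / (1 / Re w)) 1 \<partial>\<mu>) \<le> (\<integral>s. Re (?f s) \<partial>\<mu>)"
  proof (rule integral_mono_AE)
    show "integrable \<mu> (\<lambda>s. Re (?f s))"
      using int_exp[OF bt less_imp_le[OF w]] by (rule integrable_Re)
    show "integrable \<mu> (\<lambda>s. ?K * min (s / (1 / Re w)) 1)"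
      by (rule integrable_mult_right) (rule int_min[OF bt tpos])
    show "AE s in \<mu>. ?K * min (s / (1 / Re w)) 1 \<le> Re (?f s)"
      using bt_AE[OF bt]
    proof eventually_elim
      case (elim s)
      have "?K * min (s * Re w) 1 \<le> 1 - exp (- (s * Re w))"
        using elim w by (intro one_minus_exp_lower) auto
      also have "\<dots> \<le> Re (?f s)"
      proof -
        have "exp (- (s * Re w)) * cos (- (s * Im w)) \<le> exp (- (s * Re w))"
          by (rule mult_left_le) auto
        then show ?thesis by (simp add: Re_exp)
      qed
      finally show ?case by simp
    qed
  qed
  moreover have "?K * (a / 2) \<le> a" using K_bounds ab
    by (intro order.trans[OF mult_left_le_one_le[of "a/2" ?K]]) auto
  moreover have "?K * (b * Re w) \<le> b * Re w" using K_bounds ab w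
    by (intro mult_left_le_one_le) auto
  moreover have "(\<integral>s. ?K * min (s / (1 / Re w)) 1 \<partial>\<mu>) = ?K * (\<integral>s. min (s / (1 / Re w)) 1 \<partial>\<mu>)"
    by (rule integral_mult_right_zero)
  moreover have "rate_fun a b \<mu> (1 / Re w) = a / 2 + b * Re w + (\<integral>s. min (s / (1 / Re w)) 1 \<partial>\<mu>)"
    unfolding rate_fun_def by simp
  ultimately show ?thesis by (simp only: distrib_left)
qed

lemma rate_nonneg: assumes bt: "bernstein_triple a b \<mu>" and t: "t > 0"
  shows "rate_fun a b \<mu> t \<ge> 0"
proof -
  have "AE s in \<mu>. 0 \<le> min (s / t) 1"
    using bt_AE[OF bt] by eventually_elim (use t in simp)
  then have "(\<integral>s. min (s / t) 1 \<partial>\<mu>) \<ge> 0"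
    by (rule integral_nonneg_AE)
  then show ?thesis using bt_nonneg[OF bt] t unfolding rate_fun_def by simp
qed

lemma rate_mono: assumes bt: "bernstein_triple a b \<mu>" and t: "t > 0" and t0: "t0 > 0"
  shows "rate_fun a b \<mu> t \<le> max 1 (t0 / t) * rate_fun a b \<mu> t0"
proof -
  let ?M = "max 1 (t0 / t)"
  have ab: "a \<ge> 0" "b \<ge> 0" using bt_nonneg[OF bt] by auto
  have 1: "a / 2 \<le> ?M * (a / 2)" using ab mult_right_mono[of 1 ?M "a/2"] by simp
  have 2: "b / t \<le> ?M * (b / t0)"
  proof -
    have "b / t = (t0 / t) * (b / t0)" using t0 by simp
    also have "\<dots> \<le> ?M * (b / t0)" using ab t0 by (intro mult_right_mono) auto
    finally show ?thesis .
  qed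
  have 3: "(\<integral>s. min (s / t) 1 \<partial>\<mu>) \<le> (\<integral>s. ?M * min (s / t0) 1 \<partial>\<mu>)"
  proof (rule integral_mono_AE)
    show "integrable \<mu> (\<lambda>s. min (s / t) 1)" by (rule int_min[OF bt t])
    show "integrable \<mu> (\<lambda>s. ?M * min (s / t0) 1)"
      by (rule integrable_mult_right) (rule int_min[OF bt t0])
    show "AE s in \<mu>. min (s / t) 1 \<le> ?M * min (s / t0) 1"
      using bt_AE[OF bt]
    proof eventually_elim
      case (elim s)
      show ?case
      proof (cases "s / t0 \<le> 1")
        case True
        have "s / t = (t0 / t) * (s / t0)" using t0 by simp
        also have "\<dots> \<le> ?M * (s / t0)" using elim t0 by (intro mult_right_mono) auto
        finally show ?thesis using True by simp
      next
        case False then show ?thesis by (simp add: le_max_iff_disj)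
      qed
    qed
  qed
  have 4: "(\<integral>s. ?M * min (s / t0) 1 \<partial>\<mu>) = ?M * (\<integral>s. min (s / t0) 1 \<partial>\<mu>)"
    by (rule integral_mult_right_zero)
  show ?thesis unfolding rate_fun_def using 1 2 3 4 by (simp only: distrib_left)
qed

lemma bf_cont: assumes bt: "bernstein_triple a b \<mu>" and z: "Re z \<ge> 0"
  shows "(\<lambda>n. bernstein_fun a b \<mu> (z + of_real (inverse (real (Suc n))))) \<longlonglongrightarrow> bernstein_fun a b \<mu> z"
proof -
  define w where "w n = z + of_real (inverse (real (Suc n)))" for n
  have wl: "w \<longlonglongrightarrow> z"
    unfolding w_def using tendsto_add[OF tendsto_const tendsto_of_real[OF LIMSEQ_inverse_real_of_nat], of z]
    by simp
  have wre: "Re (w n) \<ge> 0" for n using z unfolding w_def by simp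
  have wn: "cmod (w n) \<le> cmod z + 1" for n
  proof -
    have "cmod (w n) \<le> cmod z + cmod (of_real (inverse (real (Suc n))) :: complex)"
      unfolding w_def by (rule norm_triangle_ineq)
    also have "cmod (of_real (inverse (real (Suc n))) :: complex) \<le> 1" by (simp only: norm_of_real) (simp add: inverse_le_1_iff)
    finally show ?thesis by simp
  qed
  have int: "(\<lambda>n. \<integral>s. 1 - exp (- (of_real s * w n)) \<partial>\<mu>) \<longlonglongrightarrow> (\<integral>s. 1 - exp (- (of_real s * z)) \<partial>\<mu>)"
  proof (rule integral_dominated_convergence[where w="\<lambda>s. max (2 * (cmod z + 1)) (2 * 2) * (s / (1 + s))"])
    show "(\<lambda>s. 1 - exp (- (of_real s * z))) \<in> borel_measurable \<mu>" by (rule bt_meas[OF bt]) measurable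
    show "(\<lambda>s. 1 - exp (- (of_real s * w n))) \<in> borel_measurable \<mu>" for n by (rule bt_meas[OF bt]) measurable
    show "integrable \<mu> (\<lambda>s. max (2 * (cmod z + 1)) (2 * 2) * (s / (1 + s)))"
      by (rule integrable_mult_right) (rule bt_int_frac[OF bt])
    show "AE s in \<mu>. (\<lambda>n. 1 - exp (- (of_real s * w n))) \<longlonglongrightarrow> 1 - exp (- (of_real s * z))"
      by (intro AE_I2 tendsto_intros wl)
    show "AE s in \<mu>. norm (1 - exp (- (of_real s * w n))) \<le> max (2 * (cmod z + 1)) (2 * 2) * (s / (1 + s))" for n
      using bt_AE[OF bt]
    proof eventually_elim
      case (elim s)
      have "norm (1 - exp (- (of_real s * w n))) \<le> min (s * cmod (w n)) 2"
        using pw_bound[of s "w n"] elim wre by simp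
      also have "\<dots> \<le> min ((cmod z + 1) * s) 2"
        using wn[of n] elim by (intro min.mono) (auto simp: mult.commute intro: mult_left_mono)
      also have "\<dots> \<le> max (2 * (cmod z + 1)) (2 * 2) * (s / (1 + s))"
        using elim by (intro min_frac_bound) auto
      finally show ?case .
    qed
  qed
  show ?thesis
    unfolding bernstein_fun_def w_def[symmetric]
    by (intro tendsto_intros wl int)
qed

lemma arith_final: fixes K R S t H G Z \<alpha> M :: real
  assumes K: "K > 0" and R: "R \<ge> 0" and S: "S > 0" and KRS: "K*R*(K*S) \<le> 1/t" and t: "t>0"
    and H: "H>0" "H \<le> M*S" and GH: "G*H = Z" and al: "\<alpha> \<le> t*Z" and M: "M>0" and Z: "Z>0"
  shows "\<alpha>*K^2/M * R \<le> G"
proof -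
  have "\<alpha>*K^2/M * R \<le> (t*Z)*K^2/M * R"
    using al K R M by (intro mult_right_mono divide_right_mono mult_right_mono) auto
  also have "\<dots> = Z/(M*S) * (t * (K*R*(K*S)))" using S M by (simp add: field_simps power2_eq_square)
  also have "\<dots> \<le> Z/(M*S) * 1"
  proof (rule mult_left_mono)
    show "t * (K*R*(K*S)) \<le> 1" using KRS t by (simp add: field_simps mult.commute)
  qed (use Z M S in auto)
  also have "\<dots> \<le> Z / H" using H Z M S by (simp add: frac_le)
  also have "\<dots> = G" using GH H by (simp add: field_simps)
  finally show ?thesis .
qed

lemma special_prod:
  assumes sp: "special_bernstein a b \<mu>"
  obtains a' b' \<mu>' where "bernstein_triple a' b' \<mu>'"
    "\<And>z. Re z \<ge> 0 \<Longrightarrow> bernstein_fun a b \<mu> z * bernstein_fun a' b' \<mu>' z = z"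
proof -
  have bt: "bernstein_triple a b \<mu>" using sp by (simp add: special_bernstein_def)
  obtain z0 where z0: "Re z0 > 0" "bernstein_fun a b \<mu> z0 \<noteq> 0"
    using sp by (auto simp: special_bernstein_def)
  obtain a' b' \<mu>' where bt': "bernstein_triple a' b' \<mu>'"
    and h: "\<And>z. Re z > 0 \<Longrightarrow> z / bernstein_fun a b \<mu> z = bernstein_fun a' b' \<mu>' z"
    using sp by (auto simp: special_bernstein_def is_bernstein_def)
  have nz: "bernstein_fun a b \<mu> w \<noteq> 0" if w: "Re w > 0" for w
  proof
    assume g0: "bernstein_fun a b \<mu> w = 0"
    let ?u = "1 / Re w"
    have t0: "?u > 0" using w by simp
    have "(1 - exp (-1)) * rate_fun a b \<mu> ?u \<le> 0" using lower_re[OF bt w] g0 by simp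
    then have r0: "rate_fun a b \<mu> ?u \<le> 0" using K_bounds(1)
      by (simp add: mult_le_0_iff)
    have cz0: "cmod z0 > 0" using z0 by auto
    let ?t = "1 / cmod z0"
    have t: "?t > 0" using cz0 by simp
    have "cmod (bernstein_fun a b \<mu> z0) \<le> max 2 1 * rate_fun a b \<mu> ?t"
      using upper[OF bt t _, of z0 1] z0 cz0 by simp
    also have "rate_fun a b \<mu> ?t \<le> max 1 (?u / ?t) * rate_fun a b \<mu> ?u"
      by (rule rate_mono[OF bt t t0])
    also have "\<dots> \<le> 0" using r0 by (simp add: mult_nonneg_nonpos)
    finally show False using z0(2) by simp
  qed
  have prod_open: "bernstein_fun a b \<mu> w * bernstein_fun a' b' \<mu>' w = w" if "Re w > 0" for w
    using h[OF that] nz[OF that] by (simp add: field_simps)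
  show ?thesis
  proof (rule that[OF bt'])
    fix z :: complex assume z: "Re z \<ge> 0"
    define w where "w n = z + of_real (inverse (real (Suc n)))" for n
    have wl: "w \<longlonglongrightarrow> z"
      unfolding w_def using tendsto_add[OF tendsto_const tendsto_of_real[OF LIMSEQ_inverse_real_of_nat], of z]
      by simp
    have "Re (w n) > 0" for n using z unfolding w_def by (simp add: add_nonneg_pos)
    then have eq: "(\<lambda>n. bernstein_fun a b \<mu> (w n) * bernstein_fun a' b' \<mu>' (w n)) = w"
      using prod_open by auto
    have "(\<lambda>n. bernstein_fun a b \<mu> (w n) * bernstein_fun a' b' \<mu>' (w n)) \<longlonglongrightarrow>
            bernstein_fun a b \<mu> z * bernstein_fun a' b' \<mu>' z"
      unfolding w_def by (intro tendsto_mult bf_cont bt bt' z)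
    then show "bernstein_fun a b \<mu> z * bernstein_fun a' b' \<mu>' z = z"
      using wl eq LIMSEQ_unique by metis
  qed
qed

lemma main_lower:
  assumes sp: "special_bernstein a b \<mu>" and t: "t > 0" and z: "Re z \<ge> 0"
    and al: "\<alpha> \<le> t * cmod z" and be: "t * cmod z \<le> \<beta>" and a0: "\<alpha> > 0"
  shows "\<alpha> * (1 - exp (-1))^2 / max 2 \<beta> * rate_fun a b \<mu> t \<le> cmod (bernstein_fun a b \<mu> z)"
proof -
  have bt: "bernstein_triple a b \<mu>" using sp by (simp add: special_bernstein_def)
  obtain a' b' \<mu>' where bt': "bernstein_triple a' b' \<mu>'"
    and pr: "\<And>z. Re z \<ge> 0 \<Longrightarrow> bernstein_fun a b \<mu> z * bernstein_fun a' b' \<mu>' z = z"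
    using special_prod[OF sp] by blast
  let ?K = "1 - exp (-1::real)"
  let ?x = "complex_of_real (1 / t)"
  have rx: "Re ?x > 0" "1 / Re ?x = t" using t by auto
  have A: "?K * rate_fun a b \<mu> t \<le> cmod (bernstein_fun a b \<mu> ?x)"
    using lower_re[OF bt rx(1)] complex_Re_le_cmod[of "bernstein_fun a b \<mu> ?x"] rx(2) by simp
  have B: "?K * rate_fun a' b' \<mu>' t \<le> cmod (bernstein_fun a' b' \<mu>' ?x)"
    using lower_re[OF bt' rx(1)] complex_Re_le_cmod[of "bernstein_fun a' b' \<mu>' ?x"] rx(2) by simp
  have P: "cmod (bernstein_fun a b \<mu> ?x) * cmod (bernstein_fun a' b' \<mu>' ?x) = 1 / t"
    using pr[of ?x] rx t by (metis less_imp_le norm_mult norm_of_real abs_of_pos zero_less_divide_1_iff)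
  have R: "rate_fun a b \<mu> t \<ge> 0" by (rule rate_nonneg[OF bt t])
  have S0: "rate_fun a' b' \<mu>' t \<ge> 0" by (rule rate_nonneg[OF bt' t])
  have KRS: "?K * rate_fun a b \<mu> t * (?K * rate_fun a' b' \<mu>' t) \<le> 1 / t"
    using mult_mono[OF A B] K_bounds R S0 P by simp
  have cz: "cmod z > 0" using al a0 t by auto
  have GH: "cmod (bernstein_fun a b \<mu> z) * cmod (bernstein_fun a' b' \<mu>' z) = cmod z"
    using pr[OF z] by (metis norm_mult)
  have H: "cmod (bernstein_fun a' b' \<mu>' z) > 0" using GH cz by auto
  have HM: "cmod (bernstein_fun a' b' \<mu>' z) \<le> max 2 \<beta> * rate_fun a' b' \<mu>' t"
    by (rule upper[OF bt' t z be])
  have M: "max 2 \<beta> > 0" by simp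
  have S: "rate_fun a' b' \<mu>' t > 0" using H HM M
    by (smt (verit) mult_nonneg_nonpos S0)
  show ?thesis
    by (rule arith_final[OF K_bounds(1) R S KRS t H HM GH al M cz])
qed

theorem proposition4p3:
  shows "(\<forall>\<alpha> \<beta>::real. 0 < \<alpha> \<and> \<alpha> \<le> \<beta> \<longrightarrow>
            (\<exists>c0 c1::real. c0 > 0 \<and> c1 > 0 \<and>
               (\<forall>a b (\<mu>::real measure) (t::real) (z::complex).
                  special_bernstein a b \<mu> \<and> t > 0 \<and> Re z \<ge> 0 \<and>
                  \<alpha> \<le> t * cmod z \<and> t * cmod z \<le> \<beta> \<longrightarrow>
                  c0 * rate_fun a b \<mu> t \<le> cmod (bernstein_fun a b \<mu> z) \<and>
                  cmod (bernstein_fun a b \<mu> z) \<le> c1 * rate_fun a b \<mu> t)))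
       \<and> (\<forall>a b (\<mu>::real measure) (t::real) (z::complex).
            special_bernstein a b \<mu> \<and> t > 0 \<and> Re z \<ge> 0 \<and> t * cmod z = 1 \<longrightarrow>
            rate_fun a b \<mu> t / (3 * exp 2) \<le> cmod (bernstein_fun a b \<mu> z))"
proof (intro conjI allI impI)
  fix \<alpha> \<beta> :: real assume ab: "0 < \<alpha> \<and> \<alpha> \<le> \<beta>"
  show "\<exists>c0 c1::real. c0 > 0 \<and> c1 > 0 \<and>
               (\<forall>a b (\<mu>::real measure) (t::real) (z::complex).
                  special_bernstein a b \<mu> \<and> t > 0 \<and> Re z \<ge> 0 \<and>
                  \<alpha> \<le> t * cmod z \<and> t * cmod z \<le> \<beta> \<longrightarrow>
                  c0 * rate_fun a b \<mu> t \<le> cmod (bernstein_fun a b \<mu> z) \<and>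
                  cmod (bernstein_fun a b \<mu> z) \<le> c1 * rate_fun a b \<mu> t)"
  proof (intro exI conjI allI impI)
    show "\<alpha> * (1 - exp (-1))^2 / max 2 \<beta> > 0" using ab K_bounds by simp
    show "max 2 \<beta> > 0" by simp
    fix a b \<mu> t z
    assume h: "special_bernstein a b \<mu> \<and> t > 0 \<and> Re z \<ge> 0 \<and> \<alpha> \<le> t * cmod z \<and> t * cmod z \<le> \<beta>"
    then show "\<alpha> * (1 - exp (-1))^2 / max 2 \<beta> * rate_fun a b \<mu> t \<le> cmod (bernstein_fun a b \<mu> z)"
      using main_lower ab by blast
    show "cmod (bernstein_fun a b \<mu> z) \<le> max 2 \<beta> * rate_fun a b \<mu> t"
      using h upper by (auto simp: special_bernstein_def)
  qed
next
  fix a b \<mu> t z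
  assume h: "special_bernstein a b \<mu> \<and> t > 0 \<and> Re z \<ge> 0 \<and> t * cmod z = 1"
  then have bt: "bernstein_triple a b \<mu>" by (simp add: special_bernstein_def)
  have R: "rate_fun a b \<mu> t \<ge> 0" using rate_nonneg[OF bt] h by simp
  have low: "1 * (1 - exp (-1))^2 / max 2 1 * rate_fun a b \<mu> t \<le> cmod (bernstein_fun a b \<mu> z)"
    using main_lower[of a b \<mu> t z 1 1] h by simp
  have e2: "exp (2::real) = exp 1 * exp 1" by (simp flip: exp_add)
  have e1: "exp (1::real) \<ge> 2" using exp_ge_add_one_self[of 1] by simp
  have ee: "exp (-1::real) = 1 / exp 1" by (simp add: exp_minus field_simps)
  have "1 / (3 * exp 2) \<le> (1 - exp (-1::real))^2 / 2"
  proof -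
    have "(1 - exp (-1::real))^2 / 2 = (exp 1 - 1)^2 / (2 * (exp 1 * exp 1))"
      by (simp add: ee field_simps power2_eq_square)
    moreover have "1 / (3 * (exp 1 * exp 1)) \<le> (exp 1 - 1)^2 / (2 * (exp 1 * exp (1::real)))"
    proof -
      have e11: "1 \<le> exp (1::real) - 1" using e1 by linarith
      have "1 * 1 \<le> (exp 1 - 1) * (exp (1::real) - 1)" by (rule mult_mono[OF e11 e11]) (use e11 in auto)
      then have "1 \<le> (exp (1::real) - 1)^2" unfolding power2_eq_square by simp
      then show ?thesis by (simp add: field_simps)
    qed
    ultimately show ?thesis using e2 by simp
  qed
  then have "1 / (3 * exp 2) * rate_fun a b \<mu> t \<le> (1 - exp (-1))^2 / 2 * rate_fun a b \<mu> t"
    by (rule mult_right_mono[OF _ R])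
  then have "rate_fun a b \<mu> t / (3 * exp 2) \<le> (1 - exp (-1))^2 / 2 * rate_fun a b \<mu> t"
    by simp
  also have "\<dots> \<le> cmod (bernstein_fun a b \<mu> z)" using low by simp
  finally show "rate_fun a b \<mu> t / (3 * exp 2) \<le> cmod (bernstein_fun a b \<mu> z)" .
qed
end
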